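(* Let $G$ be a nonempty oriented Burling graph. Then $G$ has a full in-star cutset, or $G$ is an oriented chandelier, or $G$ contains a vertex of degree at most $1$.
   Context: Graphs are finite, without loops or multiple edges; oriented graphs have no pair of opposite arcs; words such as degree, neighbor, connected, when applied to an oriented graph, refer to its underlying graph. In a rooted tree $T$ with root $r$, each non-root vertex $v$ has a parent $p(v)$; children, leaves, ancestors and descendants are as usual (every vertex is an ancestor and a descendant of itself). A branch is a sequence $v_1 v_2\dots v_k$ ($k\ge 0$) of vertices such that $v_i$ is the parent of $v_{i+1}$ for all $i<k$; it starts at $v_1$. A Burling tree is a 4-tuple $(T,r,\ell,c)$ where $T$ is a rooted tree with root $r$; $\ell$ assigns to each non-leaf vertex $v$ one of its children $\ell(v)$, called the last-born of $v$; and $c$ assigns to every vertex $v$ that is neither the root nor a last-born the vertex-set of a (possibly empty) branch of $T$ starting at $\ell(p(v))$, while $c(v)=\emptyset$ if $v$ is the root or a last-born. The oriented graph fully derived from $(T,r,\ell,c)$ has vertex-set $V(T)$ and an arc $uv$ if and only if $v\in c(u)$. An oriented graph is derived from a Burling tree if it is an induced subgraph of the oriented graph fully derived from it; an oriented Burling graph is an oriented graph derived from some Burling tree. For a vertex $v$, $N^-(v)$ is its set of in-neighbors and $N^-[v]=N^-(v)\cup\{v\}$. A full in-star cutset of an oriented graph $G$ is a set $N^-[v]$, for some $v\in V(G)$, such that $G\setminus N^-[v]$ is disconnected. An in-tree is an oriented graph obtained from a rooted tree by orienting every edge towards the root; a leaf of an in-tree is a source with exactly one out-neighbor. An oriented chandelier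 is an oriented graph obtained from an in-tree $G'$ with at least two leaves by adding a new vertex $v$ and all arcs $uv$ where $u$ is a leaf of $G'$. *)

theory Defs
  imports Main
begin

definition oriented_graph :: "'a set \<Rightarrow> ('a \<times> 'a) set \<Rightarrow> bool" where
  "oriented_graph V A \<longleftrightarrow> finite V \<and> A \<subseteq> V \<times> V \<and> (\<forall>x. (x, x) \<notin> A)
     \<and> (\<forall>x y. (x, y) \<in> A \<longrightarrow> (y, x) \<notin> A)"

(* Rooted tree on vertex set VT with root r, given by a parent function par
   (par is only meaningful on non-root vertices): every non-root vertex has its
   parent in VT and every vertex reaches the root by iterating par. *)
definition rooted_tree :: "'a set \<Rightarrow> 'a \<Rightarrow> ('a \<Rightarrow> 'a) \<Rightarrow> bool" where
  "rooted_tree VT r par \<longleftrightarrow> finite VT \<and> r \<in> VT \<and> (\<forall>v \<in> VT - {r}. par v \<in> VT)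
     \<and> (\<forall>v \<in> VT. \<exists>n. (par ^^ n) v = r)"

definition children :: "'a set \<Rightarrow> 'a \<Rightarrow> ('a \<Rightarrow> 'a) \<Rightarrow> 'a \<Rightarrow> 'a set" where
  "children VT r par v = {u \<in> VT - {r}. par u = v}"

definition is_branch :: "'a set \<Rightarrow> 'a \<Rightarrow> ('a \<Rightarrow> 'a) \<Rightarrow> 'a list \<Rightarrow> bool" where
  "is_branch VT r par xs \<longleftrightarrow> set xs \<subseteq> VT \<and>
     (\<forall>i. Suc i < length xs \<longrightarrow> xs ! Suc i \<noteq> r \<and> par (xs ! Suc i) = xs ! i)"

(* Burling tree (T, r, l, c): lb = last-born function, c = the function c *)
definition burling_tree :: "'a set \<Rightarrow> 'a \<Rightarrow> ('a \<Rightarrow> 'a) \<Rightarrow> ('a \<Rightarrow> 'a) \<Rightarrow> ('a \<Rightarrow> 'a set) \<Rightarrow> bool" where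
  "burling_tree VT r par lb c \<longleftrightarrow> rooted_tree VT r par
     \<and> (\<forall>v \<in> VT. children VT r par v \<noteq> {} \<longrightarrow> lb v \<in> children VT r par v)
     \<and> c r = {}
     \<and> (\<forall>v \<in> VT - {r}. v = lb (par v) \<longrightarrow> c v = {})
     \<and> (\<forall>v \<in> VT - {r}. v \<noteq> lb (par v) \<longrightarrow>
          (\<exists>xs. is_branch VT r par xs \<and> (xs = [] \<or> hd xs = lb (par v)) \<and> c v = set xs))"

(* G = (V, A) is an oriented graph isomorphic to an induced subgraph of the oriented
   graph fully derived from a Burling tree (tree vertices taken to be naturals,
   which is no loss since trees are finite). *)
definition oriented_burling_graph :: "'a set \<Rightarrow> ('a \<times> 'a) set \<Rightarrow> bool" where
  "oriented_burling_graph V A \<longleftrightarrow> oriented_graph V A \<and>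
     (\<exists>(VT :: nat set) r par lb c f. burling_tree VT r par lb c \<and> inj_on f V \<and> f ` V \<subseteq> VT
        \<and> (\<forall>u \<in> V. \<forall>w \<in> V. (u, w) \<in> A \<longleftrightarrow> f w \<in> c (f u)))"

definition in_nbrs :: "('a \<times> 'a) set \<Rightarrow> 'a \<Rightarrow> 'a set" where
  "in_nbrs A v = {u. (u, v) \<in> A}"

definition adj_on :: "'a set \<Rightarrow> ('a \<times> 'a) set \<Rightarrow> ('a \<times> 'a) set" where
  "adj_on W A = {(x, y). x \<in> W \<and> y \<in> W \<and> ((x, y) \<in> A \<or> (y, x) \<in> A)}"

definition disconnected_on :: "'a set \<Rightarrow> ('a \<times> 'a) set \<Rightarrow> bool" where
  "disconnected_on W A \<longleftrightarrow> (\<exists>x \<in> W. \<exists>y \<in> W. (x, y) \<notin> (adj_on W A)\<^sup>*)"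

definition has_full_in_star_cutset :: "'a set \<Rightarrow> ('a \<times> 'a) set \<Rightarrow> bool" where
  "has_full_in_star_cutset V A \<longleftrightarrow> (\<exists>v \<in> V. disconnected_on (V - insert v (in_nbrs A v)) A)"

definition degree :: "'a set \<Rightarrow> ('a \<times> 'a) set \<Rightarrow> 'a \<Rightarrow> nat" where
  "degree V A v = card {u \<in> V. (u, v) \<in> A \<or> (v, u) \<in> A}"

definition in_tree :: "'a set \<Rightarrow> ('a \<times> 'a) set \<Rightarrow> bool" where
  "in_tree V A \<longleftrightarrow> (\<exists>\<rho> par. rooted_tree V \<rho> par \<and> A = {(x, par x) | x. x \<in> V - {\<rho>}})"

definition in_tree_leaves :: "'a set \<Rightarrow> ('a \<times> 'a) set \<Rightarrow> 'a set" where
  "in_tree_leaves V A = {u \<in> V. (\<forall>x. (x, u) \<notin> A) \<and> card {w. (u, w) \<in> A} = 1}"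

definition oriented_chandelier :: "'a set \<Rightarrow> ('a \<times> 'a) set \<Rightarrow> bool" where
  "oriented_chandelier V A \<longleftrightarrow> (\<exists>v \<in> V.
     let V' = V - {v}; A' = A \<inter> (V' \<times> V') in
       in_tree V' A' \<and> 2 \<le> card (in_tree_leaves V' A')
       \<and> A = A' \<union> {(u, v) | u. u \<in> in_tree_leaves V' A'})"

end

theory Submission
  imports Defs
begin

lemma pow_Suc': "(g ^^ Suc n) v = (g ^^ n) (g v)"
  by (simp add: funpow_swap1)

locale btree =
  fixes VT :: "nat set" and r :: nat and par lb :: "nat \<Rightarrow> nat" and c :: "nat \<Rightarrow> nat set"
  assumes bt: "burling_tree VT r par lb c"
begin

lemma bt1: "rooted_tree VT r par"
  using bt unfolding burling_tree_def by (elim conjE) assumption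
lemma bt2: "\<forall>v \<in> VT. children VT r par v \<noteq> {} \<longrightarrow> lb v \<in> children VT r par v"
  using bt unfolding burling_tree_def by (elim conjE) assumption
lemma bt3: "c r = {}"
  using bt unfolding burling_tree_def by (elim conjE) assumption
lemma bt4: "\<forall>v \<in> VT - {r}. v = lb (par v) \<longrightarrow> c v = {}"
  using bt unfolding burling_tree_def by (elim conjE) assumption
lemma bt5: "\<forall>v \<in> VT - {r}. v \<noteq> lb (par v) \<longrightarrow>
          (\<exists>xs. is_branch VT r par xs \<and> (xs = [] \<or> hd xs = lb (par v)) \<and> c v = set xs)"
  using bt unfolding burling_tree_def by (elim conjE) assumption
lemma rt: "rooted_tree VT r par" by (rule bt1)
lemma bt_lb: "v \<in> VT \<Longrightarrow> children VT r par v \<noteq> {} \<Longrightarrow> lb v \<in> children VT r par v"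
  using bt2 by simp
lemma bt_cr: "c r = {}" by (rule bt3)
lemma bt_clb: "v \<in> VT - {r} \<Longrightarrow> v = lb (par v) \<Longrightarrow> c v = {}"
  using bt4 by simp
lemma bt_cbr: "v \<in> VT - {r} \<Longrightarrow> v \<noteq> lb (par v) \<Longrightarrow>
   \<exists>xs. is_branch VT r par xs \<and> (xs = [] \<or> hd xs = lb (par v)) \<and> c v = set xs"
  using bt5 by simp
lemma r_in: "r \<in> VT" using rt by (simp add: rooted_tree_def)
lemma par_in: "v \<in> VT \<Longrightarrow> v \<noteq> r \<Longrightarrow> par v \<in> VT" using rt by (simp add: rooted_tree_def)
lemma reach: "v \<in> VT \<Longrightarrow> \<exists>n. (par^^n) v = r" using rt by (simp add: rooted_tree_def)

definition dep :: "nat \<Rightarrow> nat" where "dep v = (LEAST n. (par ^^ n) v = r)"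

lemma dep_r: "dep r = 0" unfolding dep_def by (rule Least_eq_0) simp
lemma dep_spec: assumes "v \<in> VT" shows "(par ^^ dep v) v = r"
proof -
  obtain n where "(par^^n) v = r" using reach assms by blast
  thus ?thesis unfolding dep_def by (rule LeastI)
qed
lemma dep_le: "(par^^n) v = r \<Longrightarrow> dep v \<le> n" unfolding dep_def by (rule Least_le)

lemma dep_par: assumes "v \<in> VT" "v \<noteq> r" shows "dep v = Suc (dep (par v))"
proof -
  have "dep v \<noteq> 0" using dep_spec[OF assms(1)] assms(2) by (metis funpow_0)
  then obtain m where m: "dep v = Suc m" by (cases "dep v") auto
  have "(par^^Suc m) v = r" using dep_spec[OF assms(1)] m by (simp del: funpow.simps)
  hence "(par^^m) (par v) = r" by (simp only: pow_Suc')
  hence "dep (par v) \<le> m" by (rule dep_le)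
  moreover have "(par ^^ Suc (dep (par v))) v = r"
    unfolding pow_Suc' by (rule dep_spec[OF par_in[OF assms]])
  hence "dep v \<le> Suc (dep (par v))" by (rule dep_le)
  ultimately show ?thesis using m by simp
qed

lemma iter_props: "w \<in> VT \<Longrightarrow> n \<le> dep w \<Longrightarrow> (par^^n) w \<in> VT \<and> dep ((par^^n) w) = dep w - n"
proof (induction n)
  case 0 then show ?case by simp
next
  case (Suc n)
  then have IH: "(par^^n) w \<in> VT" "dep ((par^^n) w) = dep w - n" by auto
  have ne: "(par^^n) w \<noteq> r" using IH(2) Suc.prems dep_r by auto
  show ?case using dep_par[OF IH(1) ne] par_in[OF IH(1) ne] IH(2) by simp
qed

definition anc :: "nat \<Rightarrow> nat \<Rightarrow> bool" where
  "anc a w \<longleftrightarrow> w \<in> VT \<and> (\<exists>n \<le> dep w. (par^^n) w = a)"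

lemma anc_refl: assumes "w \<in> VT" shows "anc w w"
  unfolding anc_def using assms by (intro conjI exI[of _ 0]) auto

lemma anc_in: assumes "anc a w" shows "a \<in> VT \<and> w \<in> VT"
proof -
  obtain n where n: "w \<in> VT" "n \<le> dep w" "(par^^n) w = a" using assms unfolding anc_def by blast
  show ?thesis using iter_props[OF n(1,2)] n(3) n(1) by simp
qed

lemma anc_dep: assumes "anc a w" shows "dep a \<le> dep w"
proof -
  obtain n where n: "w \<in> VT" "n \<le> dep w" "(par^^n) w = a" using assms unfolding anc_def by blast
  show ?thesis using iter_props[OF n(1,2)] n(3) by simp
qed

lemma anc_iter: assumes "anc a w" shows "a = (par^^(dep w - dep a)) w"
proof -
  obtain n where n: "w \<in> VT" "n \<le> dep w" "(par^^n) w = a" using assms unfolding anc_def by blast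
  have "dep a = dep w - n" using iter_props[OF n(1,2)] n(3) by simp
  hence "dep w - dep a = n" using n(2) by simp
  thus ?thesis using n(3) by simp
qed

lemma anc_eq: "anc a w \<Longrightarrow> dep a = dep w \<Longrightarrow> a = w"
  using anc_iter by fastforce

lemma anc_comp: assumes "anc a w" "anc b w" "dep a \<le> dep b" shows "anc a b"
proof -
  have w: "w \<in> VT" using assms anc_in by blast
  have a: "a = (par^^(dep w - dep a)) w" and b: "b = (par^^(dep w - dep b)) w" using assms anc_iter by auto
  have db: "dep b \<le> dep w" using assms anc_dep by blast
  have "dep w - dep a = (dep b - dep a) + (dep w - dep b)" using assms(3) db by simp
  hence "a = (par^^(dep b - dep a)) b" using a b by (simp add: funpow_add)
  moreover have "b \<in> VT" using assms anc_in by blast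
  ultimately show ?thesis unfolding anc_def by (metis diff_le_self)
qed

lemma anc_trans: assumes "anc a b" "anc b w" shows "anc a w"
proof -
  obtain m where m: "m \<le> dep w" "(par^^m) w = b" "w \<in> VT" using assms(2) unfolding anc_def by blast
  obtain k where k: "k \<le> dep b" "(par^^k) b = a" using assms(1) unfolding anc_def by blast
  have "dep b = dep w - m" using iter_props m by blast
  hence "k + m \<le> dep w" using k m by simp
  moreover have "(par^^(k+m)) w = a" using k m by (simp add: funpow_add)
  ultimately show ?thesis using m unfolding anc_def by blast
qed

lemma anc_par: assumes "w \<in> VT" "w \<noteq> r" shows "anc (par w) w"
  unfolding anc_def using assms dep_par[OF assms] by (intro conjI exI[of _ 1]) auto

lemma anc_r: "anc a r \<Longrightarrow> a = r"
  using anc_eq anc_dep dep_r by (metis le_zero_eq)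

lemma anc_neq_par: assumes "anc a w" "a \<noteq> w" shows "w \<noteq> r \<and> anc a (par w)"
proof -
  have w: "w \<in> VT" using assms anc_in by blast
  have ne: "w \<noteq> r" using assms anc_r by blast
  have "dep a < dep w" using assms anc_dep anc_eq by (meson le_neq_implies_less)
  hence "dep a \<le> dep (par w)" using dep_par[OF w ne] by simp
  thus ?thesis using anc_comp[OF assms(1) anc_par[OF w ne]] ne by blast
qed

lemma anc_comparable: "anc a w \<Longrightarrow> anc b w \<Longrightarrow> anc a b \<or> anc b a"
  using anc_comp nat_le_linear by blast

lemma anc_antisym: "anc a b \<Longrightarrow> anc b a \<Longrightarrow> a = b"
  using anc_dep anc_eq by (meson le_antisym)

lemma sib_disj: assumes "s \<in> VT" "u \<in> VT" "s \<noteq> r" "u \<noteq> r" "par s = par u" "s \<noteq> u" "anc s w" "anc u w"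
  shows False
proof -
  have "dep s = dep u" using dep_par assms by simp
  thus False using anc_comparable[OF assms(7,8)] anc_eq assms(6) by metis
qed

lemma branch_anc: assumes "is_branch VT r par xs"
  shows "j \<le> i \<Longrightarrow> i < length xs \<Longrightarrow> anc (xs!j) (xs!i) \<and> dep (xs!i) = dep (xs!j) + (i - j)"
proof (induction i)
  case 0
  then show ?case using assms unfolding is_branch_def by (auto intro!: anc_refl)
next
  case (Suc i)
  have inV: "xs ! Suc i \<in> VT" using assms Suc.prems unfolding is_branch_def by auto
  have ne: "xs ! Suc i \<noteq> r" and p: "par (xs ! Suc i) = xs ! i" using assms Suc.prems unfolding is_branch_def by auto
  show ?case
  proof (cases "j = Suc i")
    case True then show ?thesis using inV anc_refl by simp
  next
    case False
    then have IH: "anc (xs!j) (xs!i) \<and> dep (xs!i) = dep (xs!j) + (i - j)" using Suc by auto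
    have st: "anc (xs!i) (xs ! Suc i)" using anc_par[OF inV ne] p by simp
    have "dep (xs ! Suc i) = Suc (dep (xs!i))" using dep_par[OF inV ne] p by simp
    moreover have "anc (xs!j) (xs ! Suc i)" using anc_trans[OF conjunct1[OF IH] st] .
    ultimately show ?thesis using IH False Suc.prems by (simp add: Suc_diff_le)
  qed
qed

lemma c_struct: assumes "u \<in> VT" "w \<in> c u"
  shows "u \<noteq> r \<and> lb (par u) \<noteq> u \<and> lb (par u) \<in> VT \<and> lb (par u) \<noteq> r \<and> par (lb (par u)) = par u
     \<and> lb (par u) \<in> c u \<and> (\<forall>z\<in>c u. anc (lb (par u)) z)
     \<and> (\<forall>z1\<in>c u. \<forall>z2\<in>c u. anc z1 z2 \<or> anc z2 z1)
     \<and> (\<forall>z\<in>c u. \<forall>y. anc (lb (par u)) y \<longrightarrow> anc y z \<longrightarrow> y \<in> c u)"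
proof -
  have ur: "u \<noteq> r" using bt_cr assms by auto
  have ul: "u \<noteq> lb (par u)" using bt_clb assms ur by auto
  have pin: "par u \<in> VT" using par_in assms ur by blast
  have "u \<in> children VT r par (par u)" using assms ur unfolding children_def by simp
  hence sch: "lb (par u) \<in> children VT r par (par u)" using bt_lb pin by blast
  define s where "s = lb (par u)"
  have s: "s \<in> VT" "s \<noteq> r" "par s = par u" using sch unfolding children_def s_def by auto
  obtain xs where xs: "is_branch VT r par xs" "xs = [] \<or> hd xs = s" "c u = set xs"
    using bt_cbr assms ur ul unfolding s_def by blast
  have ne: "xs \<noteq> []" using xs assms by auto
  have h: "xs ! 0 = s" using xs ne by (simp add: hd_conv_nth)
  have l0: "0 < length xs" using ne by simp
  have sin: "s \<in> c u" using nth_mem[OF l0] h xs(3) by simp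
  have a1: "\<forall>z\<in>c u. anc s z"
  proof
    fix z assume "z \<in> c u"
    then obtain i where i: "i < length xs" "z = xs ! i" using xs(3) by (auto simp: in_set_conv_nth)
    show "anc s z" using branch_anc[OF xs(1) le0 i(1)] h i(2) by simp
  qed
  have a2: "\<forall>z1\<in>c u. \<forall>z2\<in>c u. anc z1 z2 \<or> anc z2 z1"
  proof (intro ballI)
    fix z1 z2 assume "z1 \<in> c u" "z2 \<in> c u"
    then obtain i j where i: "i < length xs" "z1 = xs ! i" and j: "j < length xs" "z2 = xs ! j"
      using xs(3) by (auto simp: in_set_conv_nth)
    show "anc z1 z2 \<or> anc z2 z1"
    proof (cases "i \<le> j")
      case True then show ?thesis using branch_anc[OF xs(1) True j(1)] i j by simp
    next
      case False then have ji: "j \<le> i" by simp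
      show ?thesis using branch_anc[OF xs(1) ji i(1)] i j by simp
    qed
  qed
  have a3: "\<forall>z\<in>c u. \<forall>y. anc s y \<longrightarrow> anc y z \<longrightarrow> y \<in> c u"
  proof (intro ballI allI impI)
    fix z y assume z: "z \<in> c u" and sy: "anc s y" and yz: "anc y z"
    obtain i where i: "i < length xs" "z = xs ! i" using z xs(3) by (auto simp: in_set_conv_nth)
    have di: "dep z = dep s + i" using branch_anc[OF xs(1) le0 i(1)] i h by simp
    have "dep y \<le> dep z" using yz anc_dep by blast
    define k where "k = dep y - dep s"
    have dsy: "dep s \<le> dep y" using sy anc_dep by blast
    have ki: "k \<le> i" using di \<open>dep y \<le> dep z\<close> k_def by simp
    have "anc (xs!k) z \<and> dep z = dep (xs!k) + (i - k)" using branch_anc[OF xs(1) ki i(1)] i by simp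
    hence ak: "anc (xs!k) z" "dep (xs!k) = dep y" using di k_def dsy ki by auto
    have "xs!k = y"
    proof -
      from anc_comparable[OF ak(1) yz] show ?thesis
      proof
        assume "anc (xs!k) y" thus ?thesis using anc_eq ak(2) by blast
      next
        assume "anc y (xs!k)" thus ?thesis using anc_eq ak(2) by force
      qed
    qed
    moreover have "k < length xs" using ki i(1) by simp
    ultimately show "y \<in> c u" using nth_mem xs(3) by blast
  qed
  show ?thesis unfolding s_def[symmetric] using ur ul s sin a1 a2 a3 s_def by blast
qed

lemma c_struct': assumes "u \<in> VT" "w \<in> c u"
  shows "u \<noteq> r" "lb (par u) \<noteq> u" "lb (par u) \<in> VT" "lb (par u) \<noteq> r" "par (lb (par u)) = par u"
    "lb (par u) \<in> c u"
    "\<And>z. z \<in> c u \<Longrightarrow> anc (lb (par u)) z"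
    "\<And>z1 z2. z1 \<in> c u \<Longrightarrow> z2 \<in> c u \<Longrightarrow> anc z1 z2 \<or> anc z2 z1"
    "\<And>z y. z \<in> c u \<Longrightarrow> anc (lb (par u)) y \<Longrightarrow> anc y z \<Longrightarrow> y \<in> c u"
proof -
  note cs = c_struct[OF assms]
  note c2 = conjunct2[OF cs]
  note c3 = conjunct2[OF c2]
  note c4 = conjunct2[OF c3]
  note c5 = conjunct2[OF c4]
  note c6 = conjunct2[OF c5]
  note c7 = conjunct2[OF c6]
  note c8 = conjunct2[OF c7]
  note c9 = conjunct2[OF c8]
  show "u \<noteq> r" by (rule conjunct1[OF cs])
  show "lb (par u) \<noteq> u" by (rule conjunct1[OF c2])
  show "lb (par u) \<in> VT" by (rule conjunct1[OF c3])
  show "lb (par u) \<noteq> r" by (rule conjunct1[OF c4])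
  show "par (lb (par u)) = par u" by (rule conjunct1[OF c5])
  show "lb (par u) \<in> c u" by (rule conjunct1[OF c6])
  show "\<And>z. z \<in> c u \<Longrightarrow> anc (lb (par u)) z" using conjunct1[OF c7] by blast
  show "\<And>z1 z2. z1 \<in> c u \<Longrightarrow> z2 \<in> c u \<Longrightarrow> anc z1 z2 \<or> anc z2 z1" using conjunct1[OF c8] by blast
  show "\<And>z y. z \<in> c u \<Longrightarrow> anc (lb (par u)) y \<Longrightarrow> anc y z \<Longrightarrow> y \<in> c u" using c9 by blast
qed

lemma c_not_desc: assumes "u \<in> VT" "w \<in> c u" shows "\<not> anc u w"
proof
  assume uw: "anc u w"
  define s where "s = lb (par u)"
  note s = s_def c_struct'[OF assms(1,2), folded s_def]
  show False using sib_disj[OF s(4) assms(1) s(5) s(2) s(6) s(3) s(8)[OF assms(2)] uw] .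
qed

lemma c_dep: assumes "u \<in> VT" "w \<in> c u" shows "dep u \<le> dep w"
proof -
  define s where "s = lb (par u)"
  note s = s_def c_struct'[OF assms(1,2), folded s_def]
  have "dep s = dep u" using dep_par[OF s(4,5)] dep_par[OF assms(1) s(2)] s(6) by simp
  thus ?thesis using anc_dep[OF s(8)[OF assms(2)]] by simp
qed

lemma c_in: assumes "u \<in> VT" "w \<in> c u" shows "w \<in> VT"
proof -
  define s where "s = lb (par u)"
  note s = s_def c_struct'[OF assms(1,2), folded s_def]
  show ?thesis using anc_in[OF s(8)[OF assms(2)]] by blast
qed

lemma c_dep_eq: assumes "u \<in> VT" "w \<in> c u" "dep w = dep u" shows "c w = {}"
proof -
  define s where "s = lb (par u)"
  note s = s_def c_struct'[OF assms(1,2), folded s_def]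
  have "dep s = dep u" using dep_par[OF s(4,5)] dep_par[OF assms(1) s(2)] s(6) by simp
  hence "s = w" using anc_eq[OF s(8)[OF assms(2)]] assms(3) by simp
  hence "w = lb (par w)" "w \<in> VT - {r}" using s(1) s(4) s(5) s(6) by auto
  thus ?thesis using bt_clb by blast
qed

lemma c_sub: assumes "u \<in> VT" "w \<in> c u" "anc x u" "x \<noteq> u" shows "anc x w"
proof -
  define s where "s = lb (par u)"
  note s = s_def c_struct'[OF assms(1,2), folded s_def]
  have "anc x (par u)" using anc_neq_par assms by blast
  moreover have "anc (par u) s" using anc_par[OF s(4,5)] s(6) by simp
  ultimately show ?thesis using s(8)[OF assms(2)] anc_trans by blast
qed

lemma c_chain: assumes "u \<in> VT" "w1 \<in> c u" "w2 \<in> c u" shows "anc w1 w2 \<or> anc w2 w1"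
proof -
  define s where "s = lb (par u)"
  note s = s_def c_struct'[OF assms(1,2), folded s_def]
  show ?thesis using s(9)[OF assms(2,3)] .
qed

lemma c_enter: assumes "u \<in> VT" "z \<in> c u" "anc x z" "\<not> anc x u" shows "x \<in> c u"
proof -
  define s where "s = lb (par u)"
  note s = s_def c_struct'[OF assms(1,2), folded s_def]
  from anc_comparable[OF s(8)[OF assms(2)] assms(3)] show ?thesis
  proof
    assume "anc s x" then show ?thesis using s(10)[OF assms(2) _ assms(3)] by blast
  next
    assume sx: "anc x s"
    show ?thesis
    proof (cases "x = s")
      case True then show ?thesis using s(7) by simp
    next
      case False
      have "anc x (par s)" using anc_neq_par[OF sx False] by blast
      hence "anc x (par u)" using s(6) by simp
      hence "anc x u" using anc_trans anc_par[OF assms(1) s(2)] by blast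
      then show ?thesis using assms by blast
    qed
  qed
qed

end

locale bgraph = btree VT r par lb c for VT r par lb c +
  fixes V :: "'a set" and A :: "('a \<times> 'a) set" and f :: "'a \<Rightarrow> nat"
  assumes og: "oriented_graph V A" and injf: "inj_on f V" and fV: "f ` V \<subseteq> VT"
    and arc: "\<And>u w. u \<in> V \<Longrightarrow> w \<in> V \<Longrightarrow> (u,w) \<in> A \<longleftrightarrow> f w \<in> c (f u)"
begin

lemma finV: "finite V" using og unfolding oriented_graph_def by (elim conjE)
lemma AV: assumes "(u,w) \<in> A" shows "u \<in> V" "w \<in> V"
proof -
  have "A \<subseteq> V \<times> V" using og unfolding oriented_graph_def by (elim conjE)
  thus "u \<in> V" "w \<in> V" using assms by auto
qed
lemma asym0: "\<forall>x y. (x, y) \<in> A \<longrightarrow> (y, x) \<notin> A" using og unfolding oriented_graph_def by (elim conjE)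
lemma asym: "(u,w) \<in> A \<Longrightarrow> (w,u) \<notin> A" using asym0 by simp
lemma fin: "u \<in> V \<Longrightarrow> f u \<in> VT" using fV by blast
lemma arcc: "(u,w) \<in> A \<Longrightarrow> f w \<in> c (f u)" using arc AV by blast
lemma arc_nd: "(u,w) \<in> A \<Longrightarrow> \<not> anc (f u) (f w)" using c_not_desc[OF fin[OF AV(1)] arcc] by blast
lemma arc_dep: "(u,w) \<in> A \<Longrightarrow> dep (f u) \<le> dep (f w)" using c_dep[OF fin[OF AV(1)] arcc] by blast
lemma arc_sink: assumes "(u,w) \<in> A" "dep (f w) = dep (f u)" shows "(w,z) \<notin> A"
proof
  assume "(w,z) \<in> A"
  hence "f z \<in> c (f w)" by (rule arcc)
  moreover have "c (f w) = {}" using c_dep_eq[OF fin[OF AV(1)[OF assms(1)]] arcc[OF assms(1)] assms(2)] .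
  ultimately show False by simp
qed
lemma eqV: assumes "u \<in> V" "w \<in> V" "anc (f u) (f w)" "anc (f w) (f u)" shows "u = w"
  using anc_antisym[OF assms(3,4)] injf assms(1,2) by (simp add: inj_on_eq_iff)
lemma out_chain: assumes "(u,w1) \<in> A" "(u,w2) \<in> A" shows "anc (f w1) (f w2) \<or> anc (f w2) (f w1)"
  using c_chain[OF fin[OF AV(1)[OF assms(1)]] arcc[OF assms(1)] arcc[OF assms(2)]] .

lemma deg_le1: assumes "\<And>a b. a \<in> {z\<in>V. (z,u)\<in>A \<or> (u,z)\<in>A} \<Longrightarrow> b \<in> {z\<in>V. (z,u)\<in>A \<or> (u,z)\<in>A} \<Longrightarrow> a = b"
  shows "degree V A u \<le> 1"
proof -
  have "finite {z\<in>V. (z,u)\<in>A \<or> (u,z)\<in>A}" using finV by simp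
  hence "card {z\<in>V. (z,u)\<in>A \<or> (u,z)\<in>A} \<le> Suc 0" using assms by (subst card_le_Suc0_iff_eq) blast+
  thus ?thesis unfolding degree_def by simp
qed

lemma antichain_case: assumes "V \<noteq> {}" "\<And>x d. x \<in> V \<Longrightarrow> d \<in> V \<Longrightarrow> anc (f x) (f d) \<Longrightarrow> d = x"
  shows "\<exists>v\<in>V. degree V A v \<le> 1"
proof -
  have src: "degree V A u \<le> 1" if u: "u \<in> V" "\<And>z. (z,u) \<notin> A" for u
  proof (rule deg_le1)
    fix a b assume a: "a \<in> {z\<in>V. (z,u)\<in>A \<or> (u,z)\<in>A}" and b: "b \<in> {z\<in>V. (z,u)\<in>A \<or> (u,z)\<in>A}"
    have ua: "(u,a) \<in> A" using a u(2) by blast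
    have ub: "(u,b) \<in> A" using b u(2) by blast
    from out_chain[OF ua ub] show "a = b"
    proof
      assume "anc (f a) (f b)" thus "a = b" using assms(2) AV(2)[OF ua] AV(2)[OF ub] by metis
    next
      assume "anc (f b) (f a)" thus "a = b" using assms(2) AV(2)[OF ua] AV(2)[OF ub] by metis
    qed
  qed
  define K where "K = (\<lambda>z. dep (f z)) ` V"
  have K: "finite K" "K \<noteq> {}" using finV assms(1) unfolding K_def by auto
  have "Min K \<in> K" using Min_in[OF K] .
  then obtain y where y: "y \<in> V" "dep (f y) = Min K" unfolding K_def by auto
  have ymin: "dep (f y) \<le> dep (f z)" if "z \<in> V" for z
    using Min_le[OF K(1)] that y(2) unfolding K_def by auto
  show ?thesis
  proof (cases "\<exists>z. (z,y) \<in> A")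
    case False then show ?thesis using src[OF y(1)] y(1) by blast
  next
    case True
    then obtain w where w: "(w,y) \<in> A" by blast
    have wV: "w \<in> V" using AV(1)[OF w] .
    have eq: "dep (f w) = dep (f y)" using arc_dep[OF w] ymin[OF wV] by simp
    have "(z,w) \<notin> A" for z
    proof
      assume zw: "(z,w) \<in> A"
      have "dep (f z) \<le> dep (f w)" using arc_dep[OF zw] .
      moreover have "dep (f y) \<le> dep (f z)" using ymin[OF AV(1)[OF zw]] .
      ultimately have "dep (f w) = dep (f z)" using eq by simp
      thus False using arc_sink[OF zw _] w by blast
    qed
    then show ?thesis using src[OF wV] wV by blast
  qed
qed

lemma lemA: assumes nocut: "\<not> has_full_in_star_cutset V A" and x: "x \<in> V"
  and d: "d \<in> V" "d \<noteq> x" "anc (f x) (f d)" and y: "y \<in> V"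
  shows "anc (f x) (f y) \<or> (y, x) \<in> A"
proof (rule ccontr)
  assume H: "\<not> (anc (f x) (f y) \<or> (y,x) \<in> A)"
  define W where "W = V - insert x (in_nbrs A x)"
  have nd: "\<not> disconnected_on W A" using nocut x unfolding has_full_in_star_cutset_def W_def by (simp only: bex_simps) blast
  have fxd: "f x \<noteq> f d" using inj_onD[OF injf _ x d(1)] d(2) by auto
  have "(d,x) \<notin> A"
  proof
    assume dx: "(d,x) \<in> A"
    have "dep (f x) = dep (f d)" using arc_dep[OF dx] anc_dep[OF d(3)] by simp
    thus False using anc_eq[OF d(3)] fxd by simp
  qed
  hence dW: "d \<in> W" using d unfolding W_def in_nbrs_def by simp
  have "y \<noteq> x" using H anc_refl[OF fin[OF x]] by blast
  hence yW: "y \<in> W" using y H unfolding W_def in_nbrs_def by simp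
  have "(d,y) \<in> (adj_on W A)\<^sup>*" using nd dW yW unfolding disconnected_on_def by simp
  moreover have "anc (f x) (f z) \<and> z \<noteq> x" if "(d,z) \<in> (adj_on W A)\<^sup>*" for z
    using that
  proof (induction rule: rtrancl_induct)
    case base show ?case using d by simp
  next
    case (step z z')
    have zW: "z \<in> W" "z' \<in> W" and ar: "(z,z') \<in> A \<or> (z',z) \<in> A"
      using step(2) unfolding adj_on_def by auto
    have zV: "z \<in> V" "z' \<in> V" using zW unfolding W_def by auto
    have z'x: "z' \<noteq> x" "(z',x) \<notin> A" using zW unfolding W_def in_nbrs_def by auto
    have fxz: "f x \<noteq> f z" using inj_onD[OF injf _ x zV(1)] step(3) by auto
    from ar have "anc (f x) (f z')"
    proof
      assume "(z,z') \<in> A"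
      thus ?thesis using c_sub[OF fin[OF zV(1)] arcc _ fxz] step(3) by simp
    next
      assume a: "(z',z) \<in> A"
      show ?thesis
      proof (rule ccontr)
        assume "\<not> anc (f x) (f z')"
        hence "f x \<in> c (f z')" using c_enter[OF fin[OF zV(2)] arcc[OF a]] step(3) by blast
        hence "(z',x) \<in> A" using arc[OF zV(2) x] by simp
        thus False using z'x by simp
      qed
    qed
    thus ?case using z'x by simp
  qed
  ultimately have "anc (f x) (f y)" by blast
  thus False using H by blast
qed

lemma chandelier_case: assumes nocut: "\<not> has_full_in_star_cutset V A"
  and nodeg: "\<And>v. v \<in> V \<Longrightarrow> \<not> degree V A v \<le> 1"
  and x: "x \<in> V" and d0: "d0 \<in> V" "d0 \<noteq> x" "anc (f x) (f d0)"
  shows "oriented_chandelier V A"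
proof -
  define Ob where "Ob = in_nbrs A x"
  define D where "D = V - insert x Ob"
  define V' where "V' = V - {x}"
  have inO: "z \<in> Ob \<longleftrightarrow> (z,x) \<in> A" for z unfolding Ob_def in_nbrs_def by simp
  have OV: "z \<in> Ob \<Longrightarrow> z \<in> V" for z using inO AV(1) by blast
  have sinkx: "(x,w) \<notin> A" for w
  proof
    assume xw: "(x,w) \<in> A"
    from lemA[OF nocut x d0 AV(2)[OF xw]] show False
      using arc_nd[OF xw] asym[OF xw] by blast
  qed
  have Onot: "\<not> anc (f x) (f z)" if "z \<in> Ob" for z
  proof
    assume a: "anc (f x) (f z)"
    have zx: "(z,x) \<in> A" using that inO by simp
    have "dep (f x) = dep (f z)" using arc_dep[OF zx] anc_dep[OF a] by simp
    hence "f x = f z" using anc_eq[OF a] by simp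
    thus False using arc_nd[OF zx] anc_refl[OF fin[OF x]] by simp
  qed
  have Dchar: "z \<in> D \<longleftrightarrow> z \<in> V \<and> z \<noteq> x \<and> anc (f x) (f z)" for z
  proof
    assume z: "z \<in> D"
    hence "z \<in> V" "z \<noteq> x" "(z,x) \<notin> A" unfolding D_def using inO by auto
    thus "z \<in> V \<and> z \<noteq> x \<and> anc (f x) (f z)" using lemA[OF nocut x d0] by blast
  next
    assume "z \<in> V \<and> z \<noteq> x \<and> anc (f x) (f z)"
    thus "z \<in> D" unfolding D_def using Onot by blast
  qed
  have d0D: "d0 \<in> D" using Dchar d0 by simp
  have DV: "z \<in> D \<Longrightarrow> z \<in> V'" for z unfolding D_def V'_def by blast
  have Danti: "d1 = d2" if d1: "d1 \<in> D" and d2: "d2 \<in> D" and a: "anc (f d1) (f d2)" for d1 d2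
  proof (rule ccontr)
    assume ne: "d1 \<noteq> d2"
    have d1V: "d1 \<in> V" "d1 \<noteq> x" "anc (f x) (f d1)" using Dchar d1 by auto
    have d2V: "d2 \<in> V" using Dchar d2 by auto
    from lemA[OF nocut d1V(1) d2V _ a x] ne
    have "anc (f d1) (f x) \<or> (x, d1) \<in> A" by auto
    thus False
    proof
      assume "anc (f d1) (f x)"
      hence "x = d1" using eqV[OF x d1V(1)] d1V(3) by simp
      thus False using d1V(2) by simp
    next
      assume "(x,d1) \<in> A" thus False using sinkx by simp
    qed
  qed
  have Dout: "w \<in> D" if d: "d \<in> D" and dw: "(d,w) \<in> A" for d w
  proof -
    have dV: "d \<in> V" "d \<noteq> x" "anc (f x) (f d)" using Dchar d by auto
    have fxd: "f x \<noteq> f d" using inj_onD[OF injf _ x dV(1)] dV(2) by auto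
    have a: "anc (f x) (f w)" using c_sub[OF fin[OF dV(1)] arcc[OF dw] dV(3) fxd] .
    have "w \<noteq> x"
    proof
      assume "w = x"
      hence "d \<in> Ob" using dw inO by simp
      thus False using Onot dV(3) by blast
    qed
    thus ?thesis using Dchar AV(2)[OF dw] a by simp
  qed
  have Oind: "(o1,o2) \<notin> A" if o1: "o1 \<in> Ob" and o2: "o2 \<in> Ob" for o1 o2
  proof
    assume a: "(o1,o2) \<in> A"
    have o1x: "(o1,x) \<in> A" and o2x: "(o2,x) \<in> A" using o1 o2 inO by auto
    from out_chain[OF a o1x] show False
    proof
      assume "anc (f o2) (f x)" thus False using arc_nd[OF o2x] by simp
    next
      assume "anc (f x) (f o2)" thus False using Onot[OF o2] by simp
    qed
  qed
  have DO: "z \<in> D \<Longrightarrow> z \<notin> Ob" for z unfolding D_def by blast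
  have Osrc: "(z,o1) \<notin> A" if o1: "o1 \<in> Ob" for z o1
  proof
    assume a: "(z,o1) \<in> A"
    have zV: "z \<in> V" using AV(1)[OF a] .
    show False
    proof (cases "z = x")
      case True thus False using a sinkx by simp
    next
      case False
      show False
      proof (cases "z \<in> Ob")
        case True thus False using Oind[OF True o1] a by simp
      next
        case False
        hence "z \<in> D" unfolding D_def using zV \<open>z \<noteq> x\<close> by blast
        hence "o1 \<in> D" using Dout a by blast
        thus False using DO o1 by blast
      qed
    qed
  qed
  have outD: "w \<in> D" if y: "y \<in> V" "y \<noteq> x" and yw: "(y,w) \<in> A" and wx: "w \<noteq> x" for y w
  proof (cases "y \<in> Ob")
    case True
    have "w \<notin> Ob" using Oind[OF True] yw by blast
    thus ?thesis unfolding D_def using AV(2)[OF yw] wx by blast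
  next
    case False
    hence "y \<in> D" unfolding D_def using y by blast
    thus ?thesis using Dout yw by blast
  qed
  have outU: "w1 = w2" if y: "y \<in> V" "y \<noteq> x" and a1: "(y,w1) \<in> A" and a2: "(y,w2) \<in> A"
    and w1x: "w1 \<noteq> x" and w2x: "w2 \<noteq> x" for y w1 w2
  proof -
    have w1D: "w1 \<in> D" using outD[OF y a1 w1x] .
    have w2D: "w2 \<in> D" using outD[OF y a2 w2x] .
    from out_chain[OF a1 a2] show ?thesis
    proof
      assume "anc (f w1) (f w2)" thus ?thesis using Danti[OF w1D w2D] by simp
    next
      assume "anc (f w2) (f w1)" thus ?thesis using Danti[OF w2D w1D] by simp
    qed
  qed
  have Oout: "\<exists>w. (o1,w) \<in> A \<and> w \<noteq> x" if o1: "o1 \<in> Ob" for o1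
  proof (rule ccontr)
    assume H: "\<not> (\<exists>w. (o1,w) \<in> A \<and> w \<noteq> x)"
    have "degree V A o1 \<le> 1"
    proof (rule deg_le1)
      fix a b assume a: "a \<in> {z\<in>V. (z,o1)\<in>A \<or> (o1,z)\<in>A}" and b: "b \<in> {z\<in>V. (z,o1)\<in>A \<or> (o1,z)\<in>A}"
      have "a = x" using a H Osrc[OF o1] by blast
      moreover have "b = x" using b H Osrc[OF o1] by blast
      ultimately show "a = b" by simp
    qed
    thus False using nodeg OV[OF o1] by blast
  qed
  have cardO: "2 \<le> card Ob"
  proof -
    have "{z\<in>V. (z,x)\<in>A \<or> (x,z)\<in>A} = Ob" using inO OV sinkx by blast
    hence "\<not> card Ob \<le> 1" using nodeg[OF x] unfolding degree_def by simp
    thus ?thesis by simp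
  qed
  have Dconn: "(a,b) \<in> (adj_on D A)\<^sup>*" if "a \<in> D" "b \<in> D" for a b
  proof -
    have "\<not> disconnected_on D A" using nocut x unfolding has_full_in_star_cutset_def D_def Ob_def
      by (simp only: bex_simps) blast
    thus ?thesis using that unfolding disconnected_on_def by simp
  qed
  define snk where "snk y \<longleftrightarrow> (\<forall>w. (y,w) \<in> A \<longrightarrow> w = x)" for y
  define nxt where "nxt y = (if snk y then y else (SOME w. (y,w) \<in> A \<and> w \<noteq> x))" for y
  have nxt_arc: "(y, nxt y) \<in> A \<and> nxt y \<noteq> x" if "\<not> snk y" for y
  proof -
    have "\<exists>w. (y,w) \<in> A \<and> w \<noteq> x" using that unfolding snk_def by blast
    hence "(y, SOME w. (y,w) \<in> A \<and> w \<noteq> x) \<in> A \<and> (SOME w. (y,w) \<in> A \<and> w \<noteq> x) \<noteq> x"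
      by (rule someI_ex)
    thus ?thesis unfolding nxt_def using that by simp
  qed
  have nxt_eq: "nxt y = w" if y: "y \<in> V'" and yw: "(y,w) \<in> A" and wx: "w \<noteq> x" for y w
  proof -
    have ns: "\<not> snk y" unfolding snk_def using yw wx by blast
    have yV: "y \<in> V" "y \<noteq> x" using y unfolding V'_def by auto
    show ?thesis using outU[OF yV conjunct1[OF nxt_arc[OF ns]] yw conjunct2[OF nxt_arc[OF ns]] wx] .
  qed
  have nxt_snk: "snk y \<Longrightarrow> nxt y = y" for y unfolding nxt_def by simp
  have nxtV: "nxt y \<in> V'" if "y \<in> V'" for y
  proof (cases "snk y")
    case True thus ?thesis using that nxt_snk by simp
  next
    case False thus ?thesis using nxt_arc[OF False] AV(2) unfolding V'_def by blast
  qed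
  have iterV: "(nxt^^n) y \<in> V'" if "y \<in> V'" for n y
    by (induction n) (simp_all add: that nxtV)
  have fix_iter: "(nxt^^n) y = y" if "snk y" for n y
    by (induction n) (simp_all add: nxt_snk[OF that])
  define M where "M = Max ((\<lambda>z. dep (f z)) ` V)"
  have depM: "dep (f z) \<le> M" if "z \<in> V" for z
    unfolding M_def using finV that by simp
  define \<phi> where "\<phi> y = 2 * (M - dep (f y)) + (if snk y then 0 else 1)" for y
  have reach_snk0: "\<forall>y. y \<in> V' \<longrightarrow> \<phi> y = k \<longrightarrow> (\<exists>n. snk ((nxt^^n) y))" for k
  proof (induction k rule: less_induct)
    case (less k)
    show ?case
    proof (intro allI impI)
      fix y assume y: "y \<in> V'" and pk: "\<phi> y = k"
      show "\<exists>n. snk ((nxt^^n) y)"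
      proof (cases "snk y")
        case True thus ?thesis by (intro exI[of _ 0]) simp
      next
        case False
        define w where "w = nxt y"
        have yw: "(y,w) \<in> A" using nxt_arc[OF False] w_def by simp
        have wV': "w \<in> V'" using nxtV[OF y] w_def by simp
        have le: "dep (f y) \<le> dep (f w)" using arc_dep[OF yw] .
        have wM: "dep (f w) \<le> M" using depM AV(2)[OF yw] by blast
        have "\<phi> w < k"
        proof (cases "dep (f w) = dep (f y)")
          case True
          hence "snk w" unfolding snk_def using arc_sink[OF yw] by simp
          thus ?thesis using pk False True unfolding \<phi>_def by simp
        next
          case nt: False
          hence "dep (f y) < dep (f w)" using le by simp
          hence "M - dep (f w) < M - dep (f y)" using wM by simp
          thus ?thesis using pk False unfolding \<phi>_def by simp
        qed
        then obtain n where "snk ((nxt^^n) w)" using less wV' by blast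
        hence "snk ((nxt^^(Suc n)) y)" unfolding pow_Suc' w_def by simp
        thus ?thesis by blast
      qed
    qed
  qed
  have reach_snk: "\<exists>n. snk ((nxt^^n) y)" if "y \<in> V'" for y using reach_snk0 that by blast
  have snk_D: "y \<in> D" if y: "y \<in> V'" and s: "snk y" for y
  proof -
    have "y \<notin> Ob" using Oout s unfolding snk_def by blast
    thus ?thesis using y unfolding V'_def D_def by blast
  qed
  have snk_uniq: "s1 = s2" if s1: "s1 \<in> V'" "snk s1" and s2: "s2 \<in> V'" "snk s2" for s1 s2
  proof -
    have s1D: "s1 \<in> D" using snk_D s1 by blast
    have s2D: "s2 \<in> D" using snk_D s2 by blast
    have cl: "\<exists>n. (nxt^^n) z = s1" if "(s1, z) \<in> (adj_on D A)\<^sup>*" for z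
      using that
    proof (induction rule: rtrancl_induct)
      case base show ?case by (intro exI[of _ 0]) simp
    next
      case (step z z')
      have zD: "z \<in> D" "z' \<in> D" and ar: "(z,z') \<in> A \<or> (z',z) \<in> A"
        using step(2) unfolding adj_on_def by auto
      obtain n where n: "(nxt^^n) z = s1" using step(3) by blast
      from ar show ?case
      proof
        assume a: "(z,z') \<in> A"
        have z'x: "z' \<noteq> x" using zD Dchar by blast
        have nz: "nxt z = z'" using nxt_eq[OF DV[OF zD(1)] a z'x] .
        show ?case
        proof (cases n)
          case 0
          hence "z = s1" using n by simp
          thus ?thesis using s1(2) a z'x unfolding snk_def by blast
        next
          case (Suc m)
          hence "(nxt^^m) z' = s1" using n nz unfolding Suc pow_Suc' by simp
          thus ?thesis by blast
        qed
      next
        assume a: "(z',z) \<in> A"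
        have zx: "z \<noteq> x" using zD Dchar by blast
        have nz: "nxt z' = z" using nxt_eq[OF DV[OF zD(2)] a zx] .
        have "(nxt^^(Suc n)) z' = s1" unfolding pow_Suc' nz using n .
        thus ?case by blast
      qed
    qed
    obtain n where "(nxt^^n) s2 = s1" using cl Dconn[OF s1D s2D] by blast
    thus ?thesis using fix_iter[OF s2(2)] by simp
  qed
  have d0V': "d0 \<in> V'" using DV d0D by blast
  obtain n0 where n0: "snk ((nxt^^n0) d0)" using reach_snk[OF d0V'] by blast
  define \<rho> where "\<rho> = (nxt^^n0) d0"
  have \<rho>V: "\<rho> \<in> V'" unfolding \<rho>_def using iterV[OF d0V'] .
  have \<rho>s: "snk \<rho>" using n0 \<rho>_def by simp
  have reach\<rho>: "\<exists>n. (nxt^^n) y = \<rho>" if yV: "y \<in> V'" for y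
  proof -
    obtain n where "snk ((nxt^^n) y)" using reach_snk[OF yV] by blast
    hence "(nxt^^n) y = \<rho>" using snk_uniq[OF iterV[OF yV] _ \<rho>V \<rho>s] by simp
    thus ?thesis by blast
  qed
  have nonsnk: "\<not> snk y" if "y \<in> V'" "y \<noteq> \<rho>" for y
    using snk_uniq[OF that(1) _ \<rho>V \<rho>s] that(2) by blast
  have finV': "finite V'" using finV unfolding V'_def by simp
  have rooted: "rooted_tree V' \<rho> nxt"
    unfolding rooted_tree_def using finV' \<rho>V nxtV reach\<rho> by blast
  define A' where "A' = A \<inter> (V' \<times> V')"
  have A'eq: "A' = {(y, nxt y) | y. y \<in> V' - {\<rho>}}"
  proof (intro equalityI subsetI)
    fix p assume p: "p \<in> A'"
    obtain a b where ab: "p = (a,b)" by (cases p)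
    have a: "(a,b) \<in> A" "a \<in> V'" "b \<in> V'" using p ab unfolding A'_def by auto
    have bx: "b \<noteq> x" using a(3) unfolding V'_def by simp
    have "\<not> snk a" using a(1) bx unfolding snk_def by blast
    hence "a \<noteq> \<rho>" using \<rho>s by blast
    moreover have "nxt a = b" using nxt_eq[OF a(2) a(1) bx] .
    ultimately show "p \<in> {(y, nxt y) | y. y \<in> V' - {\<rho>}}" using ab a(2) by blast
  next
    fix p assume "p \<in> {(y, nxt y) | y. y \<in> V' - {\<rho>}}"
    then obtain y where y: "p = (y, nxt y)" "y \<in> V'" "y \<noteq> \<rho>" by blast
    have ns: "\<not> snk y" using nonsnk y(2,3) .
    have "(y, nxt y) \<in> A" "nxt y \<noteq> x" using nxt_arc[OF ns] by auto
    hence "nxt y \<in> V'" unfolding V'_def using AV(2) by blast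
    thus "p \<in> A'" unfolding A'_def using y \<open>(y, nxt y) \<in> A\<close> by blast
  qed
  have intree: "in_tree V' A'" unfolding in_tree_def using rooted A'eq by blast
  have leaves: "in_tree_leaves V' A' = Ob"
  proof (intro equalityI subsetI)
    fix u assume u: "u \<in> in_tree_leaves V' A'"
    have uV: "u \<in> V'" and nin: "\<And>z. (z,u) \<notin> A'" and c1: "card {w. (u,w) \<in> A'} = 1"
      using u unfolding in_tree_leaves_def by auto
    show "u \<in> Ob"
    proof (rule ccontr)
      assume "u \<notin> Ob"
      hence uD: "u \<in> D" using uV unfolding V'_def D_def by blast
      have sub: "{z\<in>V. (z,u)\<in>A \<or> (u,z)\<in>A} \<subseteq> {w. (u,w) \<in> A'}"
      proof
        fix z assume z: "z \<in> {z\<in>V. (z,u)\<in>A \<or> (u,z)\<in>A}"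
        hence zV: "z \<in> V" by simp
        from z have "(z,u) \<in> A \<or> (u,z) \<in> A" by simp
        thus "z \<in> {w. (u,w) \<in> A'}"
        proof
          assume zu: "(z,u) \<in> A"
          have "z \<noteq> x" using zu sinkx by blast
          hence "(z,u) \<in> A'" unfolding A'_def V'_def using zu zV uV[unfolded V'_def] by blast
          thus ?thesis using nin by blast
        next
          assume uz: "(u,z) \<in> A"
          have "z \<in> V'" using DV Dout[OF uD uz] by blast
          thus ?thesis unfolding A'_def using uz uV by blast
        qed
      qed
      have "finite {w. (u,w) \<in> A'}" using c1 by (metis card_ge_0_finite zero_less_one)
      hence "card {z\<in>V. (z,u)\<in>A \<or> (u,z)\<in>A} \<le> 1" using card_mono[OF _ sub] c1 by simp
      thus False using nodeg uV unfolding degree_def V'_def by blast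
    qed
  next
    fix o1 assume o1: "o1 \<in> Ob"
    have oV: "o1 \<in> V'" using OV[OF o1] o1 inO asym0 unfolding V'_def by auto
    have ns: "\<not> snk o1" using Oout[OF o1] unfolding snk_def by blast
    have na: "(o1, nxt o1) \<in> A" "nxt o1 \<noteq> x" using nxt_arc[OF ns] by auto
    have nV: "nxt o1 \<in> V'" using nxtV[OF oV] .
    have "{w. (o1,w) \<in> A'} = {nxt o1}"
    proof (intro equalityI subsetI)
      fix w assume "w \<in> {w. (o1,w) \<in> A'}"
      hence w: "(o1,w) \<in> A" "w \<in> V'" unfolding A'_def by auto
      have "w \<noteq> x" using w(2) unfolding V'_def by simp
      thus "w \<in> {nxt o1}" using nxt_eq[OF oV w(1)] by simp
    next
      fix w assume "w \<in> {nxt o1}"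
      thus "w \<in> {w. (o1,w) \<in> A'}" unfolding A'_def using na nV oV by simp
    qed
    moreover have "\<forall>z. (z,o1) \<notin> A'" unfolding A'_def using Osrc[OF o1] by blast
    ultimately show "o1 \<in> in_tree_leaves V' A'" unfolding in_tree_leaves_def using oV by simp
  qed
  have Aeq: "A = A' \<union> {(u, x) | u. u \<in> in_tree_leaves V' A'}"
  proof (intro equalityI subsetI)
    fix p assume p: "p \<in> A"
    obtain a b where ab: "p = (a,b)" by (cases p)
    have a1: "(a,b) \<in> A" using p ab by simp
    have aV: "a \<in> V" "b \<in> V" using AV[OF a1] by auto
    have ax: "a \<noteq> x" using a1 sinkx by blast
    show "p \<in> A' \<union> {(u, x) | u. u \<in> in_tree_leaves V' A'}"
    proof (cases "b = x")
      case True
      hence "a \<in> Ob" using inO a1 by simp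
      hence "a \<in> in_tree_leaves V' A'" using leaves by simp
      thus ?thesis using ab True by simp
    next
      case False
      hence "a \<in> V'" "b \<in> V'" using aV ax unfolding V'_def by auto
      hence "p \<in> A'" unfolding A'_def using ab a1 by simp
      thus ?thesis by simp
    qed
  next
    fix p assume p: "p \<in> A' \<union> {(u, x) | u. u \<in> in_tree_leaves V' A'}"
    show "p \<in> A"
    proof (cases "p \<in> A'")
      case True thus ?thesis unfolding A'_def by simp
    next
      case False
      then obtain u where u: "p = (u,x)" "u \<in> in_tree_leaves V' A'" using p by blast
      have "u \<in> Ob" using u(2) leaves by simp
      thus ?thesis using u(1) inO by simp
    qed
  qed
  have "in_tree V' A' \<and> 2 \<le> card (in_tree_leaves V' A') \<and> A = A' \<union> {(u, x) | u. u \<in> in_tree_leaves V' A'}"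
    using intree cardO leaves Aeq by simp
  hence "let V' = V - {x}; A' = A \<inter> (V' \<times> V') in
       in_tree V' A' \<and> 2 \<le> card (in_tree_leaves V' A')
       \<and> A = A' \<union> {(u, x) | u. u \<in> in_tree_leaves V' A'}"
    unfolding Let_def V'_def A'_def .
  thus ?thesis unfolding oriented_chandelier_def using x by blast
qed

end

theorem theorem5p5:
  fixes V :: "'a set" and A :: "('a \<times> 'a) set"
  assumes "oriented_burling_graph V A" and "V \<noteq> {}"
  shows "has_full_in_star_cutset V A \<or> oriented_chandelier V A \<or> (\<exists>v \<in> V. degree V A v \<le> 1)"
proof -
  have og: "oriented_graph V A" using assms(1) unfolding oriented_burling_graph_def by (elim conjE)
  have "\<exists>(VT :: nat set) r par lb c f. burling_tree VT r par lb c \<and> inj_on f V \<and> f ` V \<subseteq> VT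
        \<and> (\<forall>u \<in> V. \<forall>w \<in> V. (u, w) \<in> A \<longleftrightarrow> f w \<in> c (f u))"
    using assms(1) unfolding oriented_burling_graph_def by (elim conjE)
  then obtain VT :: "nat set" and r par lb c and f :: "'a \<Rightarrow> nat" where
    h: "burling_tree VT r par lb c" "inj_on f V" "f ` V \<subseteq> VT"
       "\<forall>u \<in> V. \<forall>w \<in> V. (u, w) \<in> A \<longleftrightarrow> f w \<in> c (f u)"
    by (elim exE conjE) (rule that)
  interpret g: bgraph VT r par lb c V A f
  proof (unfold_locales)
    show "burling_tree VT r par lb c" by (rule h(1))
    show "oriented_graph V A" by (rule og)
    show "inj_on f V" by (rule h(2))
    show "f ` V \<subseteq> VT" by (rule h(3))
    show "\<And>u w. u \<in> V \<Longrightarrow> w \<in> V \<Longrightarrow> (u,w) \<in> A \<longleftrightarrow> f w \<in> c (f u)" using h(4) by blast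
  qed
  show ?thesis
  proof (cases "has_full_in_star_cutset V A \<or> (\<exists>v \<in> V. degree V A v \<le> 1)")
    case True thus ?thesis by blast
  next
    case False
    hence nocut: "\<not> has_full_in_star_cutset V A" and nodeg: "\<And>v. v \<in> V \<Longrightarrow> \<not> degree V A v \<le> 1"
      by auto
    show ?thesis
    proof (cases "\<exists>x\<in>V. \<exists>d\<in>V. d \<noteq> x \<and> g.anc (f x) (f d)")
      case True
      then obtain x d where "x \<in> V" "d \<in> V" "d \<noteq> x" "g.anc (f x) (f d)" by blast
      hence "oriented_chandelier V A" using g.chandelier_case[OF nocut nodeg] by blast
      thus ?thesis by blast
    next
      case False
      hence "\<exists>v\<in>V. degree V A v \<le> 1" using g.antichain_case[OF assms(2)] by blast
      thus ?thesis using nodeg by blast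
    qed
  qed
qed

end
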